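(* Let $\mathcal{C}\in(\mathbb{R}^I)^{\otimes d}$ be symmetric and let $\mathcal{M}\subset(\mathbb{R}^I)^{\otimes(d-1)}$ be a finite set of symmetric decomposable tensors. Then $$\operatorname{srk}\operatorname{SAdj}(\mathcal{C},\mathcal{M})\le\operatorname{minsrk}(\mathcal{C}\bmod\mathcal{M})+d\dim\operatorname{Span}\mathcal{M}.$$
   Context: All tensors are real; symmetric rank $\operatorname{srk}$ is the minimal number of summands $\lambda v^{\otimes d}$. Symmetric adjoining: let $\mathcal{M}$ be indexed by a finite set $W$ disjoint from $I$, with $\mathcal{M}^{(w)}$ the element indexed by $w$. $\operatorname{SAdj}(\mathcal{C},\mathcal{M})\in(\mathbb{R}^{I\cup W})^{\otimes d}$ is the tensor $\mathcal{T}$ with $\mathcal{T}(k_1|\dots|k_d)=\mathcal{C}(k_1|\dots|k_d)$ if all $k_i\in I$; $\mathcal{T}(k_1|\dots|k_{j-1}|w|k_{j+1}|\dots|k_d)=\mathcal{M}^{(w)}(k_1|\dots|k_{j-1}|k_{j+1}|\dots|k_d)$ if $w\in W$ is in position $j$ and all other $k_h\in I$; and all other entries (two or more indices in $W$) equal $0$. $\mathcal{C}\bmod\mathcal{M}$ is the set of tensors with entries $\mathcal{C}(k_1|\dots|k_d)+\sum_{j=1}^d M_j^{(k_j)}(k_1|\dots|\widehat{k_j}|\dots|k_d)$ with arbitrary $M_j^{(k_j)}\in\operatorname{Span}\mathcal{M}$ chosen independently for each $j$ and each $k_j\in I$. $\operatorname{minsrk}\mathcal{A}$ is the minimal symmetric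 rank of a symmetric tensor in $\mathcal{A}$. *)

theory Defs
  imports "HOL-Analysis.Analysis" "HOL-Library.Function_Algebras" "HOL-Library.Extended_Nat"
begin

text \<open>Real tensors of order d indexed by a finite set A are represented as functions
  on lists of indices; only lists in tdom d A (length d, entries in A) matter.\<close>

definition tdom :: "nat \<Rightarrow> 'a set \<Rightarrow> 'a list set" where
  "tdom d A = {ks. length ks = d \<and> set ks \<subseteq> A}"

definition del_nth :: "nat \<Rightarrow> 'a list \<Rightarrow> 'a list" where
  "del_nth j ks = take j ks @ drop (Suc j) ks"

definition tsym :: "nat \<Rightarrow> 'a set \<Rightarrow> ('a list \<Rightarrow> real) \<Rightarrow> bool" where
  "tsym d A T \<longleftrightarrow> (\<forall>ks\<in>tdom d A. \<forall>ks'\<in>tdom d A. mset ks = mset ks' \<longrightarrow> T ks = T ks')"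

text \<open>Symmetric rank: minimal number of summands lambda v^{tensor d} (infinity if none).\<close>
definition srk :: "nat \<Rightarrow> 'a set \<Rightarrow> ('a list \<Rightarrow> real) \<Rightarrow> enat" where
  "srk d A T = Inf {enat r | r. \<exists>(lam :: nat \<Rightarrow> real) (v :: nat \<Rightarrow> 'a \<Rightarrow> real).
      \<forall>ks\<in>tdom d A. T ks = (\<Sum>i<r. lam i * (\<Prod>j<d. v i (ks ! j)))}"

definition sym_decomposable :: "nat \<Rightarrow> 'a set \<Rightarrow> ('a list \<Rightarrow> real) \<Rightarrow> bool" where
  "sym_decomposable d A T \<longleftrightarrow> (\<exists>(lam :: real) (v :: 'a \<Rightarrow> real).
      \<forall>ks\<in>tdom d A. T ks = lam * (\<Prod>j<d. v (ks ! j)))"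

definition trestrict :: "nat \<Rightarrow> 'a set \<Rightarrow> ('a list \<Rightarrow> real) \<Rightarrow> ('a list \<Rightarrow> real)" where
  "trestrict d A T = (\<lambda>ks. if ks \<in> tdom d A then T ks else 0)"

definition tscale :: "real \<Rightarrow> ('a list \<Rightarrow> real) \<Rightarrow> ('a list \<Rightarrow> real)" where
  "tscale c T = (\<lambda>ks. c * T ks)"

definition tspan :: "('a list \<Rightarrow> real) set \<Rightarrow> ('a list \<Rightarrow> real) set" where
  "tspan S = module.span tscale S"

definition tdim :: "('a list \<Rightarrow> real) set \<Rightarrow> nat" where
  "tdim S = vector_space.dim tscale S"

definition SpanM :: "nat \<Rightarrow> 'a set \<Rightarrow> 'a set \<Rightarrow> ('a \<Rightarrow> 'a list \<Rightarrow> real) \<Rightarrow> ('a list \<Rightarrow> real) set" where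
  "SpanM d I W M = tspan ((\<lambda>w. trestrict (d - 1) I (M w)) ` W)"

definition SAdj :: "nat \<Rightarrow> 'a set \<Rightarrow> 'a set \<Rightarrow> ('a list \<Rightarrow> real) \<Rightarrow> ('a \<Rightarrow> 'a list \<Rightarrow> real)
    \<Rightarrow> ('a list \<Rightarrow> real)" where
  "SAdj d I W C M = (\<lambda>ks.
     if set ks \<subseteq> I then C ks
     else if (\<exists>j<length ks. ks ! j \<in> W \<and> set (del_nth j ks) \<subseteq> I) then
       (let j = (THE j. j < length ks \<and> ks ! j \<in> W \<and> set (del_nth j ks) \<subseteq> I)
        in M (ks ! j) (del_nth j ks))
     else 0)"

definition Cmod :: "nat \<Rightarrow> 'a set \<Rightarrow> 'a set \<Rightarrow> ('a list \<Rightarrow> real) \<Rightarrow> ('a \<Rightarrow> 'a list \<Rightarrow> real)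
    \<Rightarrow> ('a list \<Rightarrow> real) set" where
  "Cmod d I W C M = {T. \<exists>Mf :: nat \<Rightarrow> 'a \<Rightarrow> ('a list \<Rightarrow> real).
      (\<forall>j<d. \<forall>k\<in>I. Mf j k \<in> SpanM d I W M) \<and>
      (\<forall>ks\<in>tdom d I. T ks = C ks + (\<Sum>j<d. Mf j (ks ! j) (del_nth j ks)))}"

definition minsrk :: "nat \<Rightarrow> 'a set \<Rightarrow> ('a list \<Rightarrow> real) set \<Rightarrow> enat" where
  "minsrk d A S = Inf {srk d A T | T. T \<in> S \<and> tsym d A T}"

end

theory Submission
  imports Defs "HOL-Computational_Algebra.Polynomial"
begin


lemma linprod_coeff:
  fixes a :: "nat \<Rightarrow> real"
  shows "coeff (\<Prod>q<Suc n. [:- a q, 1:]) n = - (\<Sum>q<Suc n. a q)"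
proof (induction n)
  case 0 then show ?case by simp
next
  case (Suc n)
  have lc: "coeff (\<Prod>q<Suc n. [:- a q, 1:]) (Suc n) = 1"
  proof -
    have "degree (\<Prod>q<Suc n. [:- a q, 1:]) = Suc n"
      by (subst degree_prod_eq_sum_degree) auto
    moreover have "lead_coeff (\<Prod>q<Suc n. [:- a q, 1:]) = 1"
      by (subst lead_coeff_prod) simp
    ultimately show ?thesis by metis
  qed
  have "(\<Prod>q<Suc (Suc n). [:- a q, 1:]) = (\<Prod>q<Suc n. [:- a q, 1:]) * [:- a (Suc n), 1:]"
    by (simp add: prod.lessThan_Suc)
  also have "\<dots> = smult (- a (Suc n)) (\<Prod>q<Suc n. [:- a q, 1:]) + pCons 0 (\<Prod>q<Suc n. [:- a q, 1:])"
    by simp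
  finally show ?case using Suc lc by simp
qed

lemma interp_coeff:
  fixes a :: "nat \<Rightarrow> real" and f :: "real poly"
  assumes n: "n \<ge> 1" and inj: "inj_on a {..<n}" and df: "degree f < n"
  shows "coeff f (n - 1) = (\<Sum>q<n. poly f (a q) / (\<Prod>p\<in>{..<n}-{q}. (a q - a p)))"
proof -
  define L where "L q = (\<Prod>p\<in>{..<n}-{q}. [:- a p, 1:])" for q
  define c where "c q = 1 / (\<Prod>p\<in>{..<n}-{q}. (a q - a p))" for q
  have degL: "degree (L q) = n - 1" if "q < n" for q
    unfolding L_def using that by (subst degree_prod_eq_sum_degree) auto
  have lcL: "coeff (L q) (n - 1) = 1" if "q < n" for q
  proof -
    have "lead_coeff (L q) = 1" unfolding L_def by (simp add: lead_coeff_prod)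
    then show ?thesis using degL[OF that] by simp
  qed
  have polyL: "poly (L q) x = (\<Prod>p\<in>{..<n}-{q}. (x - a p))" for q x
    unfolding L_def by (simp add: poly_prod)
  have nz: "(\<Prod>p\<in>{..<n}-{q}. (a q - a p)) \<noteq> 0" if "q < n" for q
    using inj that by (auto simp: inj_on_def)
  define g where "g = (\<Sum>q<n. smult (poly f (a q) * c q) (L q))"
  have pg: "poly g (a r) = poly f (a r)" if r: "r < n" for r
  proof -
    have "poly g (a r) = (\<Sum>q<n. poly f (a q) * c q * poly (L q) (a r))"
      unfolding g_def by (simp add: poly_sum)
    also have "\<dots> = (\<Sum>q<n. if q = r then poly f (a r) else 0)"
    proof (rule sum.cong)
      fix q assume q: "q \<in> {..<n}"
      show "poly f (a q) * c q * poly (L q) (a r) = (if q = r then poly f (a r) else 0)"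
      proof (cases "q = r")
        case True then show ?thesis using nz[OF r] by (simp add: c_def polyL)
      next
        case False
        then have "r \<in> {..<n}-{q}" using r by auto
        then have "poly (L q) (a r) = 0" unfolding polyL
          by (intro prod_zero) auto
        then show ?thesis using False by simp
      qed
    qed simp
    also have "\<dots> = poly f (a r)" using r by simp
    finally show ?thesis .
  qed
  have dg: "degree g < n"
  proof -
    have "degree g \<le> n - 1" unfolding g_def
      by (rule degree_sum_le) (auto intro: order.trans[OF degree_smult_le] simp: degL)
    then show ?thesis using n by simp
  qed
  have "f = g"
    apply (rule poly_eqI_degree[where A = "a ` {..<n}"])
    using pg dg df inj by (auto simp: card_image)
  then have "coeff f (n - 1) = coeff g (n - 1)" by simp
  also have "\<dots> = (\<Sum>q<n. poly f (a q) * c q * coeff (L q) (n - 1))"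
    by (simp add: g_def coeff_sum)
  also have "\<dots> = (\<Sum>q<n. poly f (a q) / (\<Prod>p\<in>{..<n}-{q}. (a q - a p)))"
  proof (rule sum.cong)
    fix q assume "q \<in> {..<n}"
    then show "poly f (a q) * c q * coeff (L q) (n - 1) = poly f (a q) / (\<Prod>p\<in>{..<n}-{q}. (a q - a p))"
      using lcL[of q] by (simp add: c_def)
  qed simp
  finally show ?thesis .
qed

definition nd :: "nat \<Rightarrow> nat \<Rightarrow> real" where "nd n q = 2 * real q - real n + 1"

lemma sum_nd: "(\<Sum>q<n. nd n q) = 0"
proof -
  have "(\<Sum>q<n. 2 * real q) = real n * (real n - 1)"
    by (induction n) (auto simp: algebra_simps)
  then show ?thesis by (simp add: nd_def sum.distrib sum_subtractf algebra_simps)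
qed

lemma moments:
  assumes n: "n \<ge> 1"
  shows "\<exists>c::nat \<Rightarrow> real. \<forall>m\<le>n. (\<Sum>q<n. c q * nd n q ^ m) = (if m = n - 1 then 1 else 0)"
proof -
  have inj: "inj_on (nd n) {..<n}" by (auto simp: inj_on_def nd_def)
  define c where "c q = 1 / (\<Prod>p\<in>{..<n}-{q}. (nd n q - nd n p))" for q
  have key: "coeff f (n - 1) = (\<Sum>q<n. c q * poly f (nd n q))" if "degree f < n" for f
    using interp_coeff[OF n inj that] by (simp add: c_def mult.commute)
  show ?thesis
  proof (intro exI allI impI)
    fix m assume m: "m \<le> n"
    show "(\<Sum>q<n. c q * nd n q ^ m) = (if m = n - 1 then 1 else 0)"
    proof (cases "m < n")
      case True
      have "degree (monom (1::real) m) < n" using True by (simp add: degree_monom_eq)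
      from key[OF this] show ?thesis by (simp add: coeff_monom poly_monom)
    next
      case False
      then have mn: "m = n" using m by simp
      obtain k where k: "n = Suc k" using n by (cases n) auto
      define P where "P = (\<Prod>q<n. [:- nd n q, 1:])"
      have dP: "degree P = n" unfolding P_def by (subst degree_prod_eq_sum_degree) auto
      have lP: "coeff P n = 1"
      proof -
        have "lead_coeff P = 1" unfolding P_def by (simp add: lead_coeff_prod)
        then show ?thesis using dP by simp
      qed
      have dd: "degree (monom 1 n - P) < n"
      proof -
        have "degree (monom 1 n - P) \<le> k"
        proof (rule degree_le, intro allI impI)
          fix i assume "k < i"
          then show "coeff (monom 1 n - P) i = 0"
            using lP dP k coeff_eq_0[of P i] by (cases "i = n") (auto simp: coeff_monom)
        qed
        then show ?thesis using k by simp
      qed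
      have pP: "poly P (nd n q) = 0" if "q < n" for q
        unfolding P_def poly_prod using that by (intro prod_zero) auto
      have A: "coeff (monom 1 n - P) (n - 1) = (\<Sum>q<n. c q * nd n q ^ n)"
        using key[OF dd] pP by (simp add: poly_monom)
      have cP: "coeff P k = 0"
        unfolding P_def k using linprod_coeff[of "nd (Suc k)" k] sum_nd[of "Suc k"] by simp
      have B: "coeff (monom 1 n - P) (n - 1) = 0"
        using cP k by (simp add: coeff_monom)
      have "(\<Sum>q<n. c q * nd n q ^ n) = 0" using A B by linarith
      then show ?thesis using mn n by simp
    qed
  qed
qed



lemma prod_list_map_nth: "prod_list (map f ks) = (\<Prod>j<length ks. f (ks ! j))"
  by (induction ks) (simp_all add: prod.lessThan_Suc_shift del: prod.lessThan_Suc)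

definition hr :: "nat \<Rightarrow> 'a set \<Rightarrow> ('a list \<Rightarrow> real) \<Rightarrow> nat \<Rightarrow> bool" where
  "hr d A T n \<longleftrightarrow> (\<exists>(lam::nat\<Rightarrow>real) (v::nat\<Rightarrow>'a\<Rightarrow>real).
      \<forall>ks\<in>tdom d A. T ks = (\<Sum>i<n. lam i * prod_list (map (v i) ks)))"

lemma hr_srk: assumes "hr d A T n" shows "srk d A T \<le> enat n"
proof -
  obtain lam v where h: "\<forall>ks\<in>tdom d A. T ks = (\<Sum>i<n. lam i * prod_list (map (v i) ks))"
    using assms unfolding hr_def by blast
  have "\<forall>ks\<in>tdom d A. T ks = (\<Sum>i<n. lam i * (\<Prod>j<d. v i (ks ! j)))"
    using h by (simp add: prod_list_map_nth tdom_def)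
  then show ?thesis unfolding srk_def by (intro Inf_lower) blast
qed

lemma hr_cong: "hr d A T n \<Longrightarrow> (\<And>ks. ks \<in> tdom d A \<Longrightarrow> T' ks = T ks) \<Longrightarrow> hr d A T' n"
  unfolding hr_def by metis

lemma sum_lessThan_add: "(\<Sum>i<n1+n2. f i) = (\<Sum>i<n1. f i) + (\<Sum>i<n2. f (n1 + i)) " for f :: "nat \<Rightarrow> real"
  by (induction n2) auto

lemma hr_add:
  assumes "hr d A T1 n1" "hr d A T2 n2"
  shows "hr d A (\<lambda>ks. T1 ks + T2 ks) (n1 + n2)"
proof -
  obtain lam1 v1 where h1: "\<forall>ks\<in>tdom d A. T1 ks = (\<Sum>i<n1. lam1 i * prod_list (map (v1 i) ks))"
    using assms unfolding hr_def by blast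
  obtain lam2 v2 where h2: "\<forall>ks\<in>tdom d A. T2 ks = (\<Sum>i<n2. lam2 i * prod_list (map (v2 i) ks))"
    using assms unfolding hr_def by blast
  define lam where "lam i = (if i < n1 then lam1 i else lam2 (i - n1))" for i
  define v where "v i = (if i < n1 then v1 i else v2 (i - n1))" for i
  show ?thesis unfolding hr_def
  proof (intro exI ballI)
    fix ks assume ks: "ks \<in> tdom d A"
    show "T1 ks + T2 ks = (\<Sum>i<n1 + n2. lam i * prod_list (map (v i) ks))"
      unfolding sum_lessThan_add using h1 h2 ks by (simp add: lam_def v_def)
  qed
qed

lemma hr_zero: "hr d A (\<lambda>_. 0) 0"
  unfolding hr_def by simp

lemma hr_scale: assumes "hr d A T n" shows "hr d A (\<lambda>ks. c * T ks) n"
proof -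
  obtain lam v where h: "\<forall>ks\<in>tdom d A. T ks = (\<Sum>i<n. lam i * prod_list (map (v i) ks))"
    using assms unfolding hr_def by blast
  show ?thesis unfolding hr_def
    by (rule exI[of _ "\<lambda>i. c * lam i"], rule exI[of _ v]) (simp add: h sum_distrib_left mult.assoc)
qed

lemma hr_sum: "(\<And>t. t < s \<Longrightarrow> hr d A (F t) k) \<Longrightarrow> hr d A (\<lambda>ks. \<Sum>t<s. F t ks) (s * k)"
proof (induction s)
  case 0 then show ?case using hr_zero by simp
next
  case (Suc s)
  have "hr d A (\<lambda>ks. (\<Sum>t<s. F t ks) + F s ks) (s * k + k)"
    using Suc by (intro hr_add) auto
  then show ?case by (simp add: add.commute)
qed

fun E :: "('a\<Rightarrow>real) \<Rightarrow> ('a\<Rightarrow>real) \<Rightarrow> nat \<Rightarrow> 'a list \<Rightarrow> real" where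
  "E u y m [] = (if m = 0 then 1 else 0)"
| "E u y m (z#zs) = (case m of 0 \<Rightarrow> y z * E u y 0 zs | Suc m' \<Rightarrow> u z * E u y m' zs + y z * E u y m zs)"

definition Gd :: "('a\<Rightarrow>real) \<Rightarrow> ('a\<Rightarrow>real) \<Rightarrow> 'a list \<Rightarrow> real" where
  "Gd u y ks = (\<Sum>j<length ks. y (ks!j) * prod_list (map u (del_nth j ks)))"

lemma E_big: "length ks < m \<Longrightarrow> E u y m ks = 0"
  by (induction ks arbitrary: m) (auto split: nat.split)

lemma E_top: "E u y (length ks) ks = prod_list (map u ks)"
  by (induction ks) (auto simp: E_big)

lemma Gd_Cons: "Gd u y (z#zs) = y z * prod_list (map u zs) + u z * Gd u y zs"
  unfolding Gd_def by (simp add: sum.lessThan_Suc_shift del_nth_def sum_distrib_left ac_simps del: sum.lessThan_Suc)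

lemma E_G: "length ks = Suc n \<Longrightarrow> E u y n ks = Gd u y ks"
proof (induction ks arbitrary: n)
  case Nil then show ?case by simp
next
  case (Cons z zs)
  show ?case
  proof (cases n)
    case 0 then show ?thesis using Cons by (simp add: Gd_def del_nth_def)
  next
    case (Suc n')
    then show ?thesis using Cons E_top[of u y zs] by (simp add: Gd_Cons ac_simps)
  qed
qed

lemma E_expand: "length ks \<le> N \<Longrightarrow> prod_list (map (\<lambda>z. a * u z + y z) ks) = (\<Sum>m\<le>N. a^m * E u y m ks)"
proof (induction ks arbitrary: N)
  case Nil
  then show ?case by (simp add: sum.atMost_shift)
next
  case (Cons z zs)
  then obtain N' where N: "N = Suc N'" "length zs \<le> N'" by (cases N) auto
  have IH1: "prod_list (map (\<lambda>z. a * u z + y z) zs) = (\<Sum>m\<le>N'. a^m * E u y m zs)"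
    using Cons N by simp
  have IH2: "prod_list (map (\<lambda>z. a * u z + y z) zs) = (\<Sum>m\<le>Suc N'. a^m * E u y m zs)"
    using Cons.IH[of "Suc N'"] N by simp
  have "(\<Sum>m\<le>N. a^m * E u y m (z#zs)) = y z * E u y 0 zs
      + (\<Sum>m\<le>N'. a^Suc m * (u z * E u y m zs + y z * E u y (Suc m) zs))"
    unfolding N by (simp add: sum.atMost_Suc_shift del: sum.atMost_Suc)
  also have "\<dots> = a * u z * (\<Sum>m\<le>N'. a^m * E u y m zs)
      + y z * (E u y 0 zs + (\<Sum>m\<le>N'. a^Suc m * E u y (Suc m) zs))"
    by (simp add: sum_distrib_left sum.distrib algebra_simps)
  also have "E u y 0 zs + (\<Sum>m\<le>N'. a^Suc m * E u y (Suc m) zs) = (\<Sum>m\<le>Suc N'. a^m * E u y m zs)"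
    by (simp add: sum.atMost_Suc_shift del: sum.atMost_Suc)
  finally have eq: "(\<Sum>m\<le>N. a^m * E u y m (z#zs)) = a * u z * (\<Sum>m\<le>N'. a^m * E u y m zs)
      + y z * (\<Sum>m\<le>Suc N'. a^m * E u y m zs)" .
  have "prod_list (map (\<lambda>z. a * u z + y z) (z#zs)) = a * u z * prod_list (map (\<lambda>z. a * u z + y z) zs)
     + y z * prod_list (map (\<lambda>z. a * u z + y z) zs)" by (simp add: algebra_simps)
  also have "\<dots> = a * u z * (\<Sum>m\<le>N'. a^m * E u y m zs) + y z * (\<Sum>m\<le>Suc N'. a^m * E u y m zs)"
    by (metis IH1 IH2)
  finally show ?case using eq by simp
qed

lemma hr_Gd: assumes d: "d \<ge> 1" shows "hr d A (Gd u y) d"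
proof -
  obtain c where c: "\<forall>m\<le>d. (\<Sum>q<d. c q * nd d q ^ m) = (if m = d - 1 then 1 else 0)"
    using moments[OF d] by blast
  show ?thesis unfolding hr_def
  proof (intro exI ballI)
    fix ks assume ks: "ks \<in> tdom d A"
    then have len: "length ks = d" by (simp add: tdom_def)
    have "(\<Sum>q<d. c q * prod_list (map (\<lambda>z. nd d q * u z + y z) ks))
        = (\<Sum>q<d. c q * (\<Sum>m\<le>d. nd d q ^ m * E u y m ks))"
      using len by (intro sum.cong refl) (simp add: E_expand[of ks d])
    also have "\<dots> = (\<Sum>m\<le>d. (\<Sum>q<d. c q * nd d q ^ m) * E u y m ks)"
      by (simp add: sum_distrib_left sum_distrib_right sum.swap[of _ "{..<d}"] ac_simps)
    also have "\<dots> = (\<Sum>m\<le>d. (if m = d - 1 then E u y m ks else 0))"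
      using c by (intro sum.cong) auto
    also have "\<dots> = E u y (d - 1) ks" using d by simp
    also have "\<dots> = Gd u y ks" using len d by (intro E_G) simp
    finally show "Gd u y ks = (\<Sum>q<d. c q * prod_list (map (\<lambda>z. nd d q * u z + y z) ks))" by simp
  qed
qed



lemma mset_rotate': "mset (rotate n xs) = mset xs"
proof -
  have "mset (rotate n xs) = mset (drop (n mod length xs) xs) + mset (take (n mod length xs) xs)"
    by (simp add: rotate_drop_take)
  also have "\<dots> = mset (take (n mod length xs) xs @ drop (n mod length xs) xs)"
    by (simp only: mset_append add.commute)
  finally show ?thesis by simp
qed

lemma mset_del_nth: "j < length ks \<Longrightarrow> mset (del_nth j ks) = mset ks - {#ks!j#}"
proof -
  assume j: "j < length ks"
  have "mset ks = mset (take j ks @ ks ! j # drop (Suc j) ks)"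
    using id_take_nth_drop[OF j] by metis
  then show ?thesis by (simp add: del_nth_def)
qed

lemma length_del_nth: "j < length ks \<Longrightarrow> length (del_nth j ks) = length ks - 1"
  by (simp add: del_nth_def)

lemma set_del_nth_sub: "set (del_nth j ks) \<subseteq> set ks"
  by (auto simp: del_nth_def dest: in_set_takeD in_set_dropD)

lemma nth_in_del: "i < length ks \<Longrightarrow> i \<noteq> j \<Longrightarrow> ks ! i \<in> set (del_nth j ks)"
proof -
  assume i: "i < length ks" and ij: "i \<noteq> j"
  show ?thesis
  proof (cases "i < j")
    case True
    then have "take j ks ! i = ks ! i" by simp
    moreover have "i < length (take j ks)" using True i by simp
    ultimately show ?thesis unfolding del_nth_def by (metis UnI1 nth_mem set_append)
  next
    case False
    then have ji: "j < i" using ij by simp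
    then have "drop (Suc j) ks ! (i - Suc j) = ks ! i" using i by simp
    moreover have "i - Suc j < length (drop (Suc j) ks)" using ji i by simp
    ultimately show ?thesis unfolding del_nth_def by (metis UnI2 nth_mem set_append)
  qed
qed

lemma sum_rot:
  fixes g :: "nat \<Rightarrow> real"
  assumes j: "j < d"
  shows "(\<Sum>s<d. g ((j + s) mod d)) = (\<Sum>i<d. g i)"
proof -
  have md: "(j + s) mod d = (if j + s < d then j + s else j + s - d)" if "s < d" for s
    using j that by (simp add: mod_if le_mod_geq)
  have inj: "inj_on (\<lambda>s. (j + s) mod d) {..<d}"
    by (auto simp: inj_on_def md split: if_splits)
  have sub: "(\<lambda>s. (j + s) mod d) ` {..<d} \<subseteq> {..<d}" using j by auto
  have img: "(\<lambda>s. (j + s) mod d) ` {..<d} = {..<d}"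
    using endo_inj_surj[OF _ sub inj] by simp
  show ?thesis
    using sum.reindex[OF inj, of g] img by simp
qed

lemma symz:
  fixes D :: "'a list \<Rightarrow> real" and f :: "nat \<Rightarrow> 'a \<Rightarrow> 'a list \<Rightarrow> real"
  assumes d: "d \<ge> 1" and len: "length ks = d"
    and Dexp: "\<And>s. D (rotate s ks) = (\<Sum>j<d. f j (rotate s ks ! j) (del_nth j (rotate s ks)))"
    and Dsym: "\<And>s. D (rotate s ks) = D ks"
    and fsym: "\<And>j z l l'. mset l = mset l' \<Longrightarrow> f j z l = f j z l'"
  shows "D ks = (\<Sum>i<d. (1 / real d) * (\<Sum>j<d. f j (ks ! i) (del_nth i ks)))"
proof -
  have rot: "D ks = (\<Sum>j<d. f j (ks ! ((j + s) mod d)) (del_nth ((j + s) mod d) ks))" for s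
  proof -
    have "D ks = (\<Sum>j<d. f j (rotate s ks ! j) (del_nth j (rotate s ks)))"
      using Dexp Dsym by metis
    also have "\<dots> = (\<Sum>j<d. f j (ks ! ((j + s) mod d)) (del_nth ((j + s) mod d) ks))"
    proof (rule sum.cong)
      fix j assume "j \<in> {..<d}"
      then have j: "j < d" by simp
      have n: "rotate s ks ! j = ks ! ((j + s) mod d)"
        using nth_rotate[of j ks s] j len by (simp add: add.commute)
      have lt: "(j + s) mod d < length ks" using d len by simp
      have "mset (del_nth j (rotate s ks)) = mset (del_nth ((j + s) mod d) ks)"
        using mset_del_nth[of j "rotate s ks"] mset_del_nth[OF lt] n j len
        by (simp add: mset_rotate')
      then show "f j (rotate s ks ! j) (del_nth j (rotate s ks)) = f j (ks ! ((j + s) mod d)) (del_nth ((j + s) mod d) ks)"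
        using n fsym by metis
    qed simp
    finally show ?thesis .
  qed
  have "real d * D ks = (\<Sum>s<d. D ks)" by simp
  also have "\<dots> = (\<Sum>s<d. \<Sum>j<d. f j (ks ! ((j + s) mod d)) (del_nth ((j + s) mod d) ks))"
    using rot by simp
  also have "\<dots> = (\<Sum>j<d. \<Sum>s<d. f j (ks ! ((j + s) mod d)) (del_nth ((j + s) mod d) ks))"
    by (rule sum.swap)
  also have "\<dots> = (\<Sum>j<d. \<Sum>i<d. f j (ks ! i) (del_nth i ks))"
  proof (rule sum.cong[OF refl])
    fix j assume "j \<in> {..<d}"
    then show "(\<Sum>s<d. f j (ks ! ((j + s) mod d)) (del_nth ((j + s) mod d) ks)) = (\<Sum>i<d. f j (ks ! i) (del_nth i ks))"
      using sum_rot[of j d "\<lambda>i. f j (ks ! i) (del_nth i ks)"] by simp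
  qed
  also have "\<dots> = (\<Sum>i<d. \<Sum>j<d. f j (ks ! i) (del_nth i ks))"
    by (rule sum.swap)
  finally have "real d * D ks = (\<Sum>i<d. \<Sum>j<d. f j (ks ! i) (del_nth i ks))" .
  then have "D ks = (\<Sum>i<d. \<Sum>j<d. f j (ks ! i) (del_nth i ks)) / real d"
    using d by (simp add: field_simps)
  then show ?thesis by (simp add: sum_divide_distrib)
qed



interpretation tv: vector_space "tscale :: real \<Rightarrow> ('a list \<Rightarrow> real) \<Rightarrow> ('a list \<Rightarrow> real)"
  by unfold_locales (auto simp: tscale_def fun_eq_iff algebra_simps)

lemma sum_fun_apply: "(\<Sum>v\<in>S. f v) x = (\<Sum>v\<in>S. f v x)"
  by (induction S rule: infinite_finite_induct) auto

lemma span_repr: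
  fixes B :: "('a list \<Rightarrow> real) set"  and s :: nat
  assumes bij: "bij_betw e {..<s} B" and g: "g \<in> tv.span B"
  shows "\<exists>cf. \<forall>ks. g ks = (\<Sum>t<s. cf t * e t ks)"
proof -
  have fin: "finite B" using bij_betw_finite[OF bij] by simp
  have "g \<in> range (\<lambda>u. \<Sum>v\<in>B. tscale (u v) v)"
    using g tv.span_finite[OF fin] by simp
  then obtain u where u: "g = (\<Sum>v\<in>B. tscale (u v) v)"
    by (elim rangeE)
  have "g ks = (\<Sum>t<s. u (e t) * e t ks)" for ks
  proof -
    have "g ks = (\<Sum>v\<in>B. u v * v ks)"
      unfolding u sum_fun_apply by (simp add: tscale_def)
    also have "\<dots> = (\<Sum>t<s. u (e t) * e t ks)"
      using sum.reindex_bij_betw[OF bij, of "\<lambda>v. u v * v ks"] by simp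
    finally show ?thesis .
  qed
  then show ?thesis by (intro exI[of _ "\<lambda>t. u (e t)"]) simp
qed

lemma prod_list_mset: "mset l = mset l' \<Longrightarrow> prod_list (map f l) = prod_list (map (f::'a \<Rightarrow> real) l')"
  by (metis mset_map prod_mset_prod_list)

lemma prod_list_zero: "z \<in> set l \<Longrightarrow> f z = 0 \<Longrightarrow> prod_list (map (f::'a \<Rightarrow> real) l) = 0"
  by (induction l) auto

lemma set_nth_del: "j < length ks \<Longrightarrow> set ks = insert (ks ! j) (set (del_nth j ks))"
proof -
  assume j: "j < length ks"
  have "set ks = set (take j ks @ ks ! j # drop (Suc j) ks)"
    using id_take_nth_drop[OF j] by metis
  then show ?thesis by (auto simp: del_nth_def)
qed

lemma del_tdom: "ks \<in> tdom d A \<Longrightarrow> j < d \<Longrightarrow> del_nth j ks \<in> tdom (d - 1) A"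
  unfolding tdom_def using set_del_nth_sub[of j ks] by (auto simp: length_del_nth)

lemma nth_tdom: "ks \<in> tdom d A \<Longrightarrow> j < d \<Longrightarrow> ks ! j \<in> A"
  unfolding tdom_def by auto

lemma main_one:
  fixes d :: nat and I W :: "'a set" and C T :: "'a list \<Rightarrow> real"
    and M :: "'a \<Rightarrow> 'a list \<Rightarrow> real" and r :: nat
  assumes d1: "1 \<le> d" and fW: "finite W" and disj: "I \<inter> W = {}"
    and Csym: "tsym d I C"
    and Mdec: "\<forall>w\<in>W. sym_decomposable (d - 1) I (M w)"
    and TC: "T \<in> Cmod d I W C M" and Tsym: "tsym d I T"
    and Tr: "hr d I T r"
  shows "hr d (I \<union> W) (SAdj d I W C M) (r + d * tdim (SpanM d I W M))"
proof -
  define G where "G = (\<lambda>w. trestrict (d - 1) I (M w)) ` W"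
  have SpG: "SpanM d I W M = tv.span G" unfolding SpanM_def tspan_def G_def by simp
  have dimG: "tdim (SpanM d I W M) = tv.dim G" unfolding SpG tdim_def by simp
  obtain B where BG: "B \<subseteq> G" and ind: "tv.independent B" and GB: "G \<subseteq> tv.span B" and cB: "card B = tv.dim G"
    by (rule tv.basis_exists)
  have finG: "finite G" unfolding G_def using fW by simp
  have finB: "finite B" using finite_subset[OF BG finG] .
  have spanGB: "tv.span G \<subseteq> tv.span B" by (rule tv.span_minimal[OF GB tv.subspace_span])
  define s where "s = card B"
  obtain e where "bij_betw e {0..<card B} B"
    using ex_bij_betw_nat_finite[OF finB] by (elim exE)
  then have bij: "bij_betw e {..<s} B" by (simp add: s_def atLeast0LessThan)
  have eB: "e t \<in> B" if "t < s" for t using bij_betwE[OF bij] that by simp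
  have "\<forall>t. \<exists>x. t < s \<longrightarrow> (\<forall>ks\<in>tdom (d-1) I. e t ks = fst x * prod_list (map (snd x) ks))"
  proof
    fix t
    show "\<exists>x. t < s \<longrightarrow> (\<forall>ks\<in>tdom (d-1) I. e t ks = fst x * prod_list (map (snd x) ks))"
    proof (cases "t < s")
      case True
      then obtain w where w: "w \<in> W" "e t = trestrict (d-1) I (M w)" using eB BG G_def by auto
      obtain lam v where lv: "\<forall>ks\<in>tdom (d-1) I. M w ks = lam * (\<Prod>j<d-1. v (ks!j))"
        using Mdec w unfolding sym_decomposable_def by blast
      have "\<forall>ks\<in>tdom (d-1) I. e t ks = lam * prod_list (map v ks)"
        using lv w by (auto simp: trestrict_def prod_list_map_nth tdom_def)
      then show ?thesis by (intro exI[of _ "(lam, v)"]) simp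
    qed simp
  qed
  from choice[OF this] obtain F where
    F: "\<forall>t. t < s \<longrightarrow> (\<forall>ks\<in>tdom (d-1) I. e t ks = fst (F t) * prod_list (map (snd (F t)) ks))"
    by blast
  define \<mu> where "\<mu> t = fst (F t)" for t
  define uu where "uu t = snd (F t)" for t
  have eF: "e t ks = \<mu> t * prod_list (map (uu t) ks)" if "t < s" "ks \<in> tdom (d-1) I" for t ks
    using F that unfolding \<mu>_def uu_def by blast
  obtain Mf where Mf: "\<forall>j<d. \<forall>k\<in>I. Mf j k \<in> SpanM d I W M"
    and TMf: "\<forall>ks\<in>tdom d I. T ks = C ks + (\<Sum>j<d. Mf j (ks ! j) (del_nth j ks))"
    using TC unfolding Cmod_def by blast
  have "\<forall>p. \<exists>cf. (fst p < d \<and> snd p \<in> I) \<longrightarrow> (\<forall>ks. Mf (fst p) (snd p) ks = (\<Sum>t<s. cf t * e t ks))"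
  proof
    fix p :: "nat \<times> 'a"
    show "\<exists>cf. (fst p < d \<and> snd p \<in> I) \<longrightarrow> (\<forall>ks. Mf (fst p) (snd p) ks = (\<Sum>t<s. cf t * e t ks))"
    proof (cases "fst p < d \<and> snd p \<in> I")
      case True
      then have "Mf (fst p) (snd p) \<in> tv.span B" using Mf SpG spanGB by auto
      then show ?thesis using span_repr[OF bij] by blast
    qed auto
  qed
  from choice[OF this] obtain A where
    A: "\<forall>p. (fst p < d \<and> snd p \<in> I) \<longrightarrow> (\<forall>ks. Mf (fst p) (snd p) ks = (\<Sum>t<s. A p t * e t ks))"
    by blast
  have "\<forall>w. \<exists>cf. w \<in> W \<longrightarrow> (\<forall>ks. trestrict (d - 1) I (M w) ks = (\<Sum>t<s. cf t * e t ks))"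
  proof
    fix w
    show "\<exists>cf. w \<in> W \<longrightarrow> (\<forall>ks. trestrict (d - 1) I (M w) ks = (\<Sum>t<s. cf t * e t ks))"
    proof (cases "w \<in> W")
      case True
      then have "trestrict (d - 1) I (M w) \<in> G" unfolding G_def by simp
      then have "trestrict (d - 1) I (M w) \<in> tv.span B" using GB by blast
      then show ?thesis using span_repr[OF bij] by blast
    qed auto
  qed
  from choice[OF this] obtain Cc where
    Cc: "\<forall>w. w \<in> W \<longrightarrow> (\<forall>ks. trestrict (d - 1) I (M w) ks = (\<Sum>t<s. Cc w t * e t ks))"
    by blast
  obtain lamT vT where hT: "\<forall>ks\<in>tdom d I. T ks = (\<Sum>i<r. lamT i * prod_list (map (vT i) ks))"
    using Tr unfolding hr_def by blast
  define vT' where "vT' i z = (if z \<in> I then vT i z else 0)" for i z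
  define u where "u t z = (if z \<in> I then uu t z else 0)" for t z
  define b where "b t z = (1 / real d) * (\<Sum>j<d. A (j, z) t)" for t z
  define y where "y t z = (if z \<in> W then Cc z t else if z \<in> I then - b t z else 0)" for t z
  define Tx where "Tx ks = (\<Sum>i<r. lamT i * prod_list (map (vT' i) ks))" for ks
  define Ft where "Ft t ks = \<mu> t * Gd (u t) (y t) ks" for t ks
  have h1: "hr d (I \<union> W) Tx r" unfolding hr_def Tx_def
    by (rule exI[of _ lamT], rule exI[of _ vT']) simp
  have h2: "hr d (I \<union> W) (\<lambda>ks. \<Sum>t<s. Ft t ks) (s * d)"
    unfolding Ft_def by (rule hr_sum, rule hr_scale, rule hr_Gd[OF d1])
  have h3: "hr d (I \<union> W) (\<lambda>ks. Tx ks + (\<Sum>t<s. Ft t ks)) (r + s * d)"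
    using hr_add[OF h1 h2] .
  have eq: "SAdj d I W C M ks = Tx ks + (\<Sum>t<s. Ft t ks)" if ks: "ks \<in> tdom d (I \<union> W)" for ks
  proof -
    have len: "length ks = d" using ks by (simp add: tdom_def)
    have setks: "set ks \<subseteq> I \<union> W" using ks by (simp add: tdom_def)
    show ?thesis
    proof (cases "set ks \<subseteq> I")
      case True
      have ksI: "ks \<in> tdom d I" using len True by (simp add: tdom_def)
      have SA: "SAdj d I W C M ks = C ks" using True by (simp add: SAdj_def)
      have TxT: "Tx ks = T ks"
      proof -
        have m: "map (vT' i) ks = map (vT i) ks" for i using True by (auto simp: vT'_def)
        show ?thesis using hT ksI unfolding Tx_def by (simp only: m)
      qed
      define Pm where "Pm t l = \<mu> t * prod_list (map (uu t) l)" for t l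
      define f where "f j z l = (\<Sum>t<s. A (j, z) t * Pm t l)" for j z l
      have rotI: "rotate q ks \<in> tdom d I" for q using ksI by (simp add: tdom_def)
      have Dexp: "T (rotate q ks) - C (rotate q ks) = (\<Sum>j<d. f j (rotate q ks ! j) (del_nth j (rotate q ks)))" for q
      proof -
        have "T (rotate q ks) - C (rotate q ks) = (\<Sum>j<d. Mf j (rotate q ks ! j) (del_nth j (rotate q ks)))"
          using TMf rotI[of q] by simp
        also have "\<dots> = (\<Sum>j<d. f j (rotate q ks ! j) (del_nth j (rotate q ks)))"
        proof (rule sum.cong[OF refl])
          fix j assume "j \<in> {..<d}"
          then have j: "j < d" by simp
          have zI: "rotate q ks ! j \<in> I" using nth_tdom[OF rotI j] .
          have lI: "del_nth j (rotate q ks) \<in> tdom (d - 1) I" using del_tdom[OF rotI j] .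
          have "Mf j (rotate q ks ! j) (del_nth j (rotate q ks))
              = (\<Sum>t<s. A (j, rotate q ks ! j) t * e t (del_nth j (rotate q ks)))"
            using A[rule_format, of "(j, rotate q ks ! j)"] j zI by simp
          also have "\<dots> = f j (rotate q ks ! j) (del_nth j (rotate q ks))"
            unfolding f_def Pm_def using eF[OF _ lI] by (intro sum.cong refl) simp
          finally show "Mf j (rotate q ks ! j) (del_nth j (rotate q ks)) = f j (rotate q ks ! j) (del_nth j (rotate q ks))" .
        qed
        finally show ?thesis .
      qed
      have Dsym: "T (rotate q ks) - C (rotate q ks) = T ks - C ks" for q
        using Tsym[unfolded tsym_def, rule_format, OF rotI[of q] ksI mset_rotate']
          Csym[unfolded tsym_def, rule_format, OF rotI[of q] ksI mset_rotate'] by simp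
      have fsym: "f j z l = f j z l'" if "mset l = mset l'" for j z l l'
        unfolding f_def Pm_def using prod_list_mset[OF that, of "uu _"] by (intro sum.cong refl) simp
      have "T ks - C ks = (\<Sum>i<d. (1 / real d) * (\<Sum>j<d. f j (ks ! i) (del_nth i ks)))"
        by (rule symz[where D = "\<lambda>l. T l - C l" and f = f, OF d1 len Dexp Dsym fsym])
      also have "\<dots> = (\<Sum>i<d. \<Sum>t<s. b t (ks ! i) * Pm t (del_nth i ks))"
      proof (rule sum.cong[OF refl])
        fix i assume "i \<in> {..<d}"
        have "(\<Sum>t<s. b t (ks ! i) * Pm t (del_nth i ks))
            = (\<Sum>t<s. \<Sum>j<d. (1 / real d) * (A (j, ks ! i) t * Pm t (del_nth i ks)))"
          unfolding b_def by (simp add: sum_distrib_left sum_distrib_right mult.assoc)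
        also have "\<dots> = (\<Sum>j<d. \<Sum>t<s. (1 / real d) * (A (j, ks ! i) t * Pm t (del_nth i ks)))"
          by (rule sum.swap)
        also have "\<dots> = (1 / real d) * (\<Sum>j<d. f j (ks ! i) (del_nth i ks))"
          unfolding f_def by (simp add: sum_distrib_left)
        finally show "(1 / real d) * (\<Sum>j<d. f j (ks ! i) (del_nth i ks)) = (\<Sum>t<s. b t (ks ! i) * Pm t (del_nth i ks))" by simp
      qed
      finally have D: "T ks - C ks = (\<Sum>i<d. \<Sum>t<s. b t (ks ! i) * Pm t (del_nth i ks))" .
      have "(\<Sum>t<s. Ft t ks) = (\<Sum>t<s. \<Sum>i<d. - (b t (ks ! i) * Pm t (del_nth i ks)))"
      proof (rule sum.cong[OF refl])
        fix t assume "t \<in> {..<s}"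
        have "Ft t ks = (\<Sum>i<d. \<mu> t * (y t (ks ! i) * prod_list (map (u t) (del_nth i ks))))"
          unfolding Ft_def Gd_def len by (simp add: sum_distrib_left)
        also have "\<dots> = (\<Sum>i<d. - (b t (ks ! i) * Pm t (del_nth i ks)))"
        proof (rule sum.cong[OF refl])
          fix i assume "i \<in> {..<d}"
          then have i: "i < d" by simp
          have zI: "ks ! i \<in> I" using nth_tdom[OF ksI i] .
          then have zW: "ks ! i \<notin> W" using disj by blast
          have lI: "set (del_nth i ks) \<subseteq> I" using set_del_nth_sub[of i ks] True by blast
          have mm: "map (u t) (del_nth i ks) = map (uu t) (del_nth i ks)"
            using lI by (auto simp: u_def)
          show "\<mu> t * (y t (ks ! i) * prod_list (map (u t) (del_nth i ks))) = - (b t (ks ! i) * Pm t (del_nth i ks))"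
            unfolding mm using zI zW by (simp add: y_def Pm_def)
        qed
        finally show "Ft t ks = (\<Sum>i<d. - (b t (ks ! i) * Pm t (del_nth i ks)))" .
      qed
      also have "\<dots> = - (\<Sum>i<d. \<Sum>t<s. b t (ks ! i) * Pm t (del_nth i ks))"
        by (subst sum.swap) (simp add: sum_negf)
      finally show ?thesis using SA TxT D by simp
    next
      case False
      then obtain z0 where z0: "z0 \<in> set ks" "z0 \<notin> I" by blast
      have Tx0: "Tx ks = 0" unfolding Tx_def
      proof (rule sum.neutral, rule ballI)
        fix i assume "i \<in> {..<r}"
        have "prod_list (map (vT' i) ks) = 0"
          using prod_list_zero[OF z0(1), of "vT' i"] z0(2) by (simp add: vT'_def)
        then show "lamT i * prod_list (map (vT' i) ks) = 0" by simp
      qed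
      define cond where "cond j \<longleftrightarrow> ks ! j \<in> W \<and> set (del_nth j ks) \<subseteq> I" for j
      have uniq: "j1 = j2" if "j1 < d" "j2 < d" "cond j1" "cond j2" for j1 j2
      proof (rule ccontr)
        assume "j1 \<noteq> j2"
        then have "ks ! j1 \<in> set (del_nth j2 ks)" using nth_in_del[of j1 ks j2] that len by simp
        then have "ks ! j1 \<in> I" using that(4) unfolding cond_def by blast
        moreover have "ks ! j1 \<in> W" using that(3) unfolding cond_def by blast
        ultimately show False using disj by blast
      qed
      have termeq: "\<mu> t * (y t (ks ! j) * prod_list (map (u t) (del_nth j ks)))
          = (if cond j then Cc (ks ! j) t * e t (del_nth j ks) else 0)" if t: "t < s" and j: "j < d" for t j
      proof (cases "cond j")
        case True
        then have W: "ks ! j \<in> W" and sI: "set (del_nth j ks) \<subseteq> I" unfolding cond_def by auto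
        have mm: "map (u t) (del_nth j ks) = map (uu t) (del_nth j ks)"
          using sI by (auto simp: u_def)
        have lI: "del_nth j ks \<in> tdom (d - 1) I" using sI j len by (simp add: tdom_def length_del_nth)
        show ?thesis unfolding mm using True W eF[OF t lI] by (simp add: y_def)
      next
        case False
        show ?thesis
        proof (cases "set (del_nth j ks) \<subseteq> I")
          case True
          then have "ks ! j \<notin> W" using False unfolding cond_def by blast
          moreover have "ks ! j \<in> set ks" using j len by simp
          then have "ks ! j \<in> I \<union> W" using setks by blast
          ultimately have "ks ! j \<in> I" by blast
          then have "set ks \<subseteq> I" using set_nth_del[of j ks] True j len by auto
          then show ?thesis using \<open>\<not> set ks \<subseteq> I\<close> by blast
        next
          case nI: False
          then obtain z where z: "z \<in> set (del_nth j ks)" "z \<notin> I" by blast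
          have "prod_list (map (u t) (del_nth j ks)) = 0"
            using prod_list_zero[OF z(1), of "u t"] z(2) by (simp add: u_def)
          then show ?thesis using False by simp
        qed
      qed
      have sumF: "(\<Sum>t<s. Ft t ks) = (\<Sum>j<d. if cond j then M (ks ! j) (del_nth j ks) else 0)"
      proof -
        have "(\<Sum>t<s. Ft t ks) = (\<Sum>t<s. \<Sum>j<d. \<mu> t * (y t (ks ! j) * prod_list (map (u t) (del_nth j ks))))"
          unfolding Ft_def Gd_def len by (simp add: sum_distrib_left)
        also have "\<dots> = (\<Sum>t<s. \<Sum>j<d. if cond j then Cc (ks ! j) t * e t (del_nth j ks) else 0)"
          using termeq by (intro sum.cong refl) simp
        also have "\<dots> = (\<Sum>j<d. \<Sum>t<s. if cond j then Cc (ks ! j) t * e t (del_nth j ks) else 0)"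
          by (rule sum.swap)
        also have "\<dots> = (\<Sum>j<d. if cond j then M (ks ! j) (del_nth j ks) else 0)"
        proof (rule sum.cong[OF refl])
          fix j assume "j \<in> {..<d}"
          then have j: "j < d" by simp
          show "(\<Sum>t<s. if cond j then Cc (ks ! j) t * e t (del_nth j ks) else 0) = (if cond j then M (ks ! j) (del_nth j ks) else 0)"
          proof (cases "cond j")
            case True
            then have W: "ks ! j \<in> W" and sI: "set (del_nth j ks) \<subseteq> I" unfolding cond_def by auto
            have lI: "del_nth j ks \<in> tdom (d - 1) I" using sI j len by (simp add: tdom_def length_del_nth)
            have "(\<Sum>t<s. Cc (ks ! j) t * e t (del_nth j ks)) = trestrict (d - 1) I (M (ks ! j)) (del_nth j ks)"
              using Cc[rule_format, OF W] by simp
            also have "\<dots> = M (ks ! j) (del_nth j ks)" using lI by (simp add: trestrict_def)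
            finally show ?thesis using True by simp
          qed simp
        qed
        finally show ?thesis .
      qed
      show ?thesis
      proof (cases "\<exists>j<d. cond j")
        case True
        then obtain j0 where j0: "j0 < d" "cond j0" by blast
        have the: "(THE j. j < length ks \<and> ks ! j \<in> W \<and> set (del_nth j ks) \<subseteq> I) = j0"
          using j0 uniq len unfolding cond_def by (intro the_equality) auto
        have SA: "SAdj d I W C M ks = M (ks ! j0) (del_nth j0 ks)"
          using False j0 len the unfolding SAdj_def cond_def Let_def by auto
        have "(\<Sum>j<d. if cond j then M (ks ! j) (del_nth j ks) else 0)
            = (\<Sum>j<d. if j = j0 then M (ks ! j0) (del_nth j0 ks) else 0)"
          using uniq j0 by (intro sum.cong refl) auto
        also have "\<dots> = M (ks ! j0) (del_nth j0 ks)" using j0 by simp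
        finally show ?thesis using SA Tx0 sumF by simp
      next
        case nc: False
        have SA: "SAdj d I W C M ks = 0"
          using False nc len unfolding SAdj_def cond_def by auto
        have "(\<Sum>j<d. if cond j then M (ks ! j) (del_nth j ks) else 0) = 0"
          using nc by (intro sum.neutral) auto
        then show ?thesis using SA Tx0 sumF by simp
      qed
    qed
  qed
  have sd: "r + s * d = r + d * tdim (SpanM d I W M)" using dimG cB s_def by (simp add: mult.commute)
  show ?thesis unfolding sd[symmetric] by (rule hr_cong[OF h3 eq])
qed

lemma enat_Inf_mem: "Inf (S :: enat set) \<noteq> \<infinity> \<Longrightarrow> Inf S \<in> S"
  by (metis Inf_enat_def LeastI ex_in_conv)

lemma srk_hr: assumes "srk d A T = enat r" shows "hr d A T r"
proof -
  define R where "R = {enat r |r. \<exists>(lam :: nat \<Rightarrow> real) (v :: nat \<Rightarrow> 'a \<Rightarrow> real).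
      \<forall>ks\<in>tdom d A. T ks = (\<Sum>i<r. lam i * (\<Prod>j<d. v i (ks ! j)))}"
  have "Inf R = enat r" using assms unfolding srk_def R_def by simp
  then have "enat r \<in> R" using enat_Inf_mem[of R] by simp
  then obtain lam v where h: "\<forall>ks\<in>tdom d A. T ks = (\<Sum>i<r. lam i * (\<Prod>j<d. v i (ks ! j)))"
    unfolding R_def by auto
  have "\<forall>ks\<in>tdom d A. T ks = (\<Sum>i<r. lam i * prod_list (map (v i) ks))"
    using h by (simp add: prod_list_map_nth tdom_def)
  then show ?thesis unfolding hr_def by blast
qed

theorem proposition3p15:
  fixes d :: nat and I W :: "'a set"
    and C :: "'a list \<Rightarrow> real" and M :: "'a \<Rightarrow> 'a list \<Rightarrow> real"
  assumes "1 \<le> d"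
    and "finite I" and "finite W" and "I \<inter> W = {}"
    and "tsym d I C"
    and "\<forall>w\<in>W. sym_decomposable (d - 1) I (M w)"
    and "\<forall>w1\<in>W. \<forall>w2\<in>W. (\<forall>ks\<in>tdom (d - 1) I. M w1 ks = M w2 ks) \<longrightarrow> w1 = w2"
  shows "srk d (I \<union> W) (SAdj d I W C M)
           \<le> minsrk d I (Cmod d I W C M) + enat (d * tdim (SpanM d I W M))"
proof -
  define S where "S = {srk d I T | T. T \<in> Cmod d I W C M \<and> tsym d I T}"
  have ms: "minsrk d I (Cmod d I W C M) = Inf S" unfolding minsrk_def S_def ..
  show ?thesis
  proof (cases "Inf S = \<infinity>")
    case True then show ?thesis by (simp add: ms)
  next
    case False
    then have "Inf S \<in> S" by (rule enat_Inf_mem)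
    then obtain T where T: "T \<in> Cmod d I W C M" "tsym d I T" "srk d I T = Inf S"
      unfolding S_def by auto
    obtain r where r: "Inf S = enat r" using False by (cases "Inf S") auto
    have "hr d I T r" using T(3) r srk_hr by metis
    then have "hr d (I \<union> W) (SAdj d I W C M) (r + d * tdim (SpanM d I W M))"
      using main_one[OF assms(1) assms(3) assms(4) assms(5) assms(6) T(1) T(2)] by blast
    then have "srk d (I \<union> W) (SAdj d I W C M) \<le> enat (r + d * tdim (SpanM d I W M))"
      by (rule hr_srk)
    then show ?thesis using ms r by simp
  qed
qed


end
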